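(* Let $X$ be a finite connected poset with $|X|>2$. Then the group $\mathcal{P}(X)$ is isomorphic to $\mathrm{Aut}^\pm(X)$.
   Context: $\mathrm{Aut}(X)$ is the group of poset automorphisms of $X$, $\mathrm{Aut}^-(X)$ the set of anti-automorphisms (order-reversing bijections $X\to X$), and $\mathrm{Aut}^\pm(X)=\mathrm{Aut}(X)\cup\mathrm{Aut}^-(X)$, a group under composition. For $x<y$ in $X$, $e_{xy}$ denotes the incidence-algebra basis element (indicator of $(x,y)$), and $B=\{e_{xy}:x<y\}$. A bijection $\theta:B\to B$ is proper if there is $\lambda\in\mathrm{Aut}(X)$ with $\theta(e_{xy})=e_{\lambda(x)\lambda(y)}$ for all $x<y$, or $\lambda\in\mathrm{Aut}^-(X)$ with $\theta(e_{xy})=e_{\lambda(y)\lambda(x)}$ for all $x<y$; $\mathcal{P}(X)$ is the group of proper bijections of $B$. *)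

theory Defs
  imports "HOL-Algebra.Group" "HOL-Library.FuncSet"
begin

definition poset_less :: "'a rel \<Rightarrow> 'a \<Rightarrow> 'a \<Rightarrow> bool" where
  "poset_less r x y \<longleftrightarrow> (x, y) \<in> r \<and> x \<noteq> y"

definition poset_connected :: "'a set \<Rightarrow> 'a rel \<Rightarrow> bool" where
  "poset_connected X r \<longleftrightarrow> X \<noteq> {} \<and>
     (\<forall>x\<in>X. \<forall>y\<in>X. (x, y) \<in> ({(u, v). u \<in> X \<and> v \<in> X \<and> ((u, v) \<in> r \<or> (v, u) \<in> r)})\<^sup>*)"

definition is_poset_aut :: "'a set \<Rightarrow> 'a rel \<Rightarrow> ('a \<Rightarrow> 'a) \<Rightarrow> bool" where
  "is_poset_aut X r f \<longleftrightarrow> bij_betw f X X \<and>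
     (\<forall>x\<in>X. \<forall>y\<in>X. (x, y) \<in> r \<longleftrightarrow> (f x, f y) \<in> r)"

definition is_poset_antiaut :: "'a set \<Rightarrow> 'a rel \<Rightarrow> ('a \<Rightarrow> 'a) \<Rightarrow> bool" where
  "is_poset_antiaut X r f \<longleftrightarrow> bij_betw f X X \<and>
     (\<forall>x\<in>X. \<forall>y\<in>X. (x, y) \<in> r \<longleftrightarrow> (f y, f x) \<in> r)"

definition aut_pm_group :: "'a set \<Rightarrow> 'a rel \<Rightarrow> ('a \<Rightarrow> 'a) monoid" where
  "aut_pm_group X r = \<lparr> carrier = {f. f \<in> extensional X \<and>
        (is_poset_aut X r f \<or> is_poset_antiaut X r f)},
     mult = (\<lambda>f g. compose X f g), one = restrict id X \<rparr>"

text \<open>The basis B of the incidence algebra: e_xy for x < y is represented by the pair (x,y).\<close>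
definition inc_basis :: "'a set \<Rightarrow> 'a rel \<Rightarrow> ('a \<times> 'a) set" where
  "inc_basis X r = {(x, y). x \<in> X \<and> y \<in> X \<and> poset_less r x y}"

definition is_proper :: "'a set \<Rightarrow> 'a rel \<Rightarrow> ('a \<times> 'a \<Rightarrow> 'a \<times> 'a) \<Rightarrow> bool" where
  "is_proper X r \<theta> \<longleftrightarrow> bij_betw \<theta> (inc_basis X r) (inc_basis X r) \<and>
     (\<exists>f. (is_poset_aut X r f \<and> (\<forall>(x, y)\<in>inc_basis X r. \<theta> (x, y) = (f x, f y)))
        \<or> (is_poset_antiaut X r f \<and> (\<forall>(x, y)\<in>inc_basis X r. \<theta> (x, y) = (f y, f x))))"

definition proper_group :: "'a set \<Rightarrow> 'a rel \<Rightarrow> ('a \<times> 'a \<Rightarrow> 'a \<times> 'a) monoid" where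
  "proper_group X r = \<lparr> carrier = {\<theta>. \<theta> \<in> extensional (inc_basis X r) \<and> is_proper X r \<theta>},
     mult = (\<lambda>f g. compose (inc_basis X r) f g), one = restrict id (inc_basis X r) \<rparr>"

end

theory Submission
  imports Defs
begin

definition cgraph :: "'a set \<Rightarrow> 'a rel \<Rightarrow> 'a rel" where
  "cgraph X r = {(u, v). u \<in> X \<and> v \<in> X \<and> ((u, v) \<in> r \<or> (v, u) \<in> r)}"

definition cmpb :: "'a rel \<Rightarrow> 'a \<Rightarrow> 'a \<Rightarrow> bool" where
  "cmpb r u v \<longleftrightarrow> u \<noteq> v \<and> ((u, v) \<in> r \<or> (v, u) \<in> r)"

definition PhiM :: "'a set \<Rightarrow> 'a rel \<Rightarrow> ('a \<Rightarrow> 'a) \<Rightarrow> ('a \<times> 'a \<Rightarrow> 'a \<times> 'a)" where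
  "PhiM X r f = restrict (\<lambda>p. if is_poset_aut X r f then (f (fst p), f (snd p))
      else (f (snd p), f (fst p))) (inc_basis X r)"

context
  fixes X :: "'a set" and r :: "'a rel"
  assumes po: "partial_order_on X r"
    and fin: "finite X"
    and con: "poset_connected X r"
    and c2: "card X > 2"
begin

lemma r_sub: "(x, y) \<in> r \<Longrightarrow> x \<in> X \<and> y \<in> X"
  using po unfolding partial_order_on_def preorder_on_def refl_on_def by auto

lemma r_antisym: "(x, y) \<in> r \<Longrightarrow> (y, x) \<in> r \<Longrightarrow> x = y"
  using po unfolding partial_order_on_def antisym_def by auto

lemma conn: "x \<in> X \<Longrightarrow> y \<in> X \<Longrightarrow> (x, y) \<in> (cgraph X r)\<^sup>*"
  using con unfolding poset_connected_def cgraph_def by auto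

lemma L1:
  assumes x: "x \<in> X"
  shows "\<exists>y\<in>X. cmpb r x y"
proof -
  have "\<not> X \<subseteq> {x}"
  proof
    assume "X \<subseteq> {x}"
    then have "card X \<le> card {x}" by (intro card_mono) auto
    then show False using c2 by simp
  qed
  then obtain z where z: "z \<in> X" "z \<noteq> x" by auto
  have "(x, z) \<in> (cgraph X r)\<^sup>*" using conn x z by auto
  then have "z \<noteq> x \<longrightarrow> (\<exists>y\<in>X. cmpb r x y)"
  proof (induction rule: rtrancl_induct)
    case base
    then show ?case by simp
  next
    case (step w z)
    show ?case
    proof
      assume zx: "z \<noteq> x"
      show "\<exists>y\<in>X. cmpb r x y"
      proof (cases "w = x")
        case True
        then show ?thesis using step(2) zx unfolding cgraph_def cmpb_def by auto
      next
        case False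
        then show ?thesis using step(3) by auto
      qed
    qed
  qed
  then show ?thesis using z by auto
qed

lemma L2: "\<exists>u\<in>X. \<exists>a\<in>X. \<exists>b\<in>X. a \<noteq> b \<and> cmpb r u a \<and> cmpb r u b"
proof -
  obtain x where x: "x \<in> X" using c2 by (metis card.empty equals0I not_less_zero)
  obtain y where y: "y \<in> X" "cmpb r x y" using L1[OF x] by auto
  have "\<not> X \<subseteq> {x, y}"
  proof
    assume "X \<subseteq> {x, y}"
    then have "card X \<le> card {x, y}" by (intro card_mono) auto
    also have "\<dots> \<le> 2" by (simp add: card_insert_if)
    finally show False using c2 by simp
  qed
  then obtain z where z: "z \<in> X" "z \<notin> {x, y}" by auto
  have "(x, z) \<in> (cgraph X r)\<^sup>*" using conn x z by auto
  then have "z \<notin> {x, y} \<longrightarrow> (\<exists>u\<in>{x, y}. \<exists>v\<in>X - {x, y}. cmpb r u v)"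
  proof (induction rule: rtrancl_induct)
    case base
    then show ?case by simp
  next
    case (step w z)
    show ?case
    proof
      assume zx: "z \<notin> {x, y}"
      show "\<exists>u\<in>{x, y}. \<exists>v\<in>X - {x, y}. cmpb r u v"
      proof (cases "w \<in> {x, y}")
        case True
        then show ?thesis using step(2) zx unfolding cgraph_def cmpb_def by fastforce
      next
        case False
        then show ?thesis using step(3) by auto
      qed
    qed
  qed
  then obtain u v where uv: "u \<in> {x, y}" "v \<in> X - {x, y}" "cmpb r u v" using z by auto
  show ?thesis
  proof (cases "u = x")
    case True
    then show ?thesis using uv x y by auto
  next
    case False
    then have "u = y" using uv by auto
    then show ?thesis using uv x y unfolding cmpb_def by auto
  qed
qed

lemma L3: "\<exists>a\<in>X. \<exists>b\<in>X. poset_less r a b"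
  using L2 unfolding cmpb_def poset_less_def by blast

lemma aut_lt: "is_poset_aut X r f \<Longrightarrow> poset_less r x y \<Longrightarrow> x \<in> X \<Longrightarrow> y \<in> X
   \<Longrightarrow> poset_less r (f x) (f y)"
  unfolding is_poset_aut_def poset_less_def bij_betw_def inj_on_def by auto

lemma anti_lt: "is_poset_antiaut X r f \<Longrightarrow> poset_less r x y \<Longrightarrow> x \<in> X \<Longrightarrow> y \<in> X
   \<Longrightarrow> poset_less r (f y) (f x)"
  unfolding is_poset_antiaut_def poset_less_def bij_betw_def inj_on_def by auto

lemma not_both: "is_poset_aut X r f \<Longrightarrow> is_poset_antiaut X r f \<Longrightarrow> False"
proof -
  assume a: "is_poset_aut X r f" and b: "is_poset_antiaut X r f"
  obtain x y where xy: "x \<in> X" "y \<in> X" "poset_less r x y" using L3 by auto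
  have "poset_less r (f x) (f y)" using aut_lt[OF a xy(3) xy(1,2)] .
  moreover have "poset_less r (f y) (f x)" using anti_lt[OF b xy(3) xy(1,2)] .
  ultimately show False using r_antisym unfolding poset_less_def by auto
qed

lemma comp_gen:
  assumes f: "bij_betw f X X" and g: "bij_betw g X X"
  shows "bij_betw (compose X f g) X X"
  using bij_betw_compose[OF g f] .

lemma comp_aa: "is_poset_aut X r f \<Longrightarrow> is_poset_aut X r g \<Longrightarrow> is_poset_aut X r (compose X f g)"
  unfolding is_poset_aut_def
  apply (elim conjE)
proof (intro conjI ballI)
  fix x y assume f: "bij_betw f X X" and fr: "\<forall>x\<in>X. \<forall>y\<in>X. ((x, y) \<in> r) = ((f x, f y) \<in> r)"
    and g: "bij_betw g X X" and gr: "\<forall>x\<in>X. \<forall>y\<in>X. ((x, y) \<in> r) = ((g x, g y) \<in> r)"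
    and x: "x \<in> X" and y: "y \<in> X"
  have gx: "g x \<in> X" "g y \<in> X" using g x y bij_betw_apply by metis+
  show "((x, y) \<in> r) = ((compose X f g x, compose X f g y) \<in> r)"
    using fr[rule_format, OF gx] gr[rule_format, OF x y] x y by (simp add: compose_eq)
qed (auto simp: bij_betw_compose)

lemma comp_nn: "is_poset_antiaut X r f \<Longrightarrow> is_poset_antiaut X r g \<Longrightarrow> is_poset_aut X r (compose X f g)"
  unfolding is_poset_aut_def is_poset_antiaut_def
  apply (elim conjE)
proof (intro conjI ballI)
  fix x y assume f: "bij_betw f X X" and fr: "\<forall>x\<in>X. \<forall>y\<in>X. ((x, y) \<in> r) = ((f y, f x) \<in> r)"
    and g: "bij_betw g X X" and gr: "\<forall>x\<in>X. \<forall>y\<in>X. ((x, y) \<in> r) = ((g y, g x) \<in> r)"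
    and x: "x \<in> X" and y: "y \<in> X"
  have gx: "g y \<in> X" "g x \<in> X" using g x y bij_betw_apply by metis+
  show "((x, y) \<in> r) = ((compose X f g x, compose X f g y) \<in> r)"
    using fr[rule_format, OF gx] gr[rule_format, OF x y] x y by (simp add: compose_eq)
qed (auto simp: bij_betw_compose)

lemma comp_an: "is_poset_aut X r f \<Longrightarrow> is_poset_antiaut X r g \<Longrightarrow> is_poset_antiaut X r (compose X f g)"
  unfolding is_poset_aut_def is_poset_antiaut_def
  apply (elim conjE)
proof (intro conjI ballI)
  fix x y assume f: "bij_betw f X X" and fr: "\<forall>x\<in>X. \<forall>y\<in>X. ((x, y) \<in> r) = ((f x, f y) \<in> r)"
    and g: "bij_betw g X X" and gr: "\<forall>x\<in>X. \<forall>y\<in>X. ((x, y) \<in> r) = ((g y, g x) \<in> r)"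
    and x: "x \<in> X" and y: "y \<in> X"
  have gx: "g y \<in> X" "g x \<in> X" using g x y bij_betw_apply by metis+
  show "((x, y) \<in> r) = ((compose X f g y, compose X f g x) \<in> r)"
    using fr[rule_format, OF gx] gr[rule_format, OF x y] x y by (simp add: compose_eq)
qed (auto simp: bij_betw_compose)

lemma comp_na: "is_poset_antiaut X r f \<Longrightarrow> is_poset_aut X r g \<Longrightarrow> is_poset_antiaut X r (compose X f g)"
  unfolding is_poset_aut_def is_poset_antiaut_def
  apply (elim conjE)
proof (intro conjI ballI)
  fix x y assume f: "bij_betw f X X" and fr: "\<forall>x\<in>X. \<forall>y\<in>X. ((x, y) \<in> r) = ((f y, f x) \<in> r)"
    and g: "bij_betw g X X" and gr: "\<forall>x\<in>X. \<forall>y\<in>X. ((x, y) \<in> r) = ((g x, g y) \<in> r)"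
    and x: "x \<in> X" and y: "y \<in> X"
  have gx: "g x \<in> X" "g y \<in> X" using g x y bij_betw_apply by metis+
  show "((x, y) \<in> r) = ((compose X f g y, compose X f g x) \<in> r)"
    using fr[rule_format, OF gx] gr[rule_format, OF x y] x y by (simp add: compose_eq)
qed (auto simp: bij_betw_compose)

lemma B_fin: "finite (inc_basis X r)"
proof -
  have "inc_basis X r \<subseteq> X \<times> X" unfolding inc_basis_def by auto
  then show ?thesis using fin finite_subset by blast
qed

lemma Phi_in:
  assumes fa: "is_poset_aut X r f \<or> is_poset_antiaut X r f"
  shows "PhiM X r f \<in> extensional (inc_basis X r) \<and> is_proper X r (PhiM X r f)"
proof -
  let ?B = "inc_basis X r"
  define h where "h = (\<lambda>p. if is_poset_aut X r f then (f (fst p), f (snd p)) else (f (snd p), f (fst p)))"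
  have PhiM_eq: "PhiM X r f = restrict h ?B" by (simp add: PhiM_def h_def)
  have fbij: "bij_betw f X X" using fa unfolding is_poset_aut_def is_poset_antiaut_def by auto
  have fX: "\<And>x. x \<in> X \<Longrightarrow> f x \<in> X" using fbij bij_betw_apply by metis
  have finj: "inj_on f X" using fbij bij_betw_def by auto
  have sub: "h ` ?B \<subseteq> ?B"
  proof
    fix q assume "q \<in> h ` ?B"
    then obtain x y where xy: "x \<in> X" "y \<in> X" "poset_less r x y" and q: "q = h (x, y)"
      unfolding inc_basis_def by auto
    show "q \<in> ?B"
    proof (cases "is_poset_aut X r f")
      case True
      then show ?thesis using aut_lt[OF True xy(3) xy(1,2)] q xy fX
        unfolding h_def inc_basis_def by auto
    next
      case False
      then have an: "is_poset_antiaut X r f" using fa by auto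
      then show ?thesis using anti_lt[OF an xy(3) xy(1,2)] q xy fX False
        unfolding h_def inc_basis_def by auto
    qed
  qed
  have inj: "inj_on h ?B"
  proof (rule inj_onI)
    fix p q assume p: "p \<in> ?B" and q: "q \<in> ?B" and e: "h p = h q"
    then have "fst p \<in> X" "snd p \<in> X" "fst q \<in> X" "snd q \<in> X"
      unfolding inc_basis_def by auto
    moreover have "f (fst p) = f (fst q) \<and> f (snd p) = f (snd q)"
      using e unfolding h_def by (auto split: if_splits)
    ultimately show "p = q" using finj inj_on_def by (metis prod.expand)
  qed
  have "h ` ?B = ?B" using endo_inj_surj[OF B_fin sub inj] .
  then have hb: "bij_betw h ?B ?B" using inj bij_betw_def by blast
  have pb: "bij_betw (PhiM X r f) ?B ?B"
    unfolding PhiM_eq using hb bij_betw_cong[of ?B "restrict h ?B" h] by simp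
  have wit: "(is_poset_aut X r f \<and> (\<forall>(x, y)\<in>?B. PhiM X r f (x, y) = (f x, f y)))
        \<or> (is_poset_antiaut X r f \<and> (\<forall>(x, y)\<in>?B. PhiM X r f (x, y) = (f y, f x)))"
    using fa unfolding PhiM_eq h_def by auto
  have ext: "PhiM X r f \<in> extensional ?B" unfolding PhiM_eq by simp
  show ?thesis unfolding is_proper_def using pb wit ext by blast
qed

lemma Phi_aut: "is_poset_aut X r f \<Longrightarrow> (x, y) \<in> inc_basis X r \<Longrightarrow> PhiM X r f (x, y) = (f x, f y)"
  unfolding PhiM_def by simp

lemma Phi_anti: "is_poset_antiaut X r f \<Longrightarrow> (x, y) \<in> inc_basis X r \<Longrightarrow> PhiM X r f (x, y) = (f y, f x)"
  unfolding PhiM_def using not_both by auto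

lemma B_cases: "x \<in> X \<Longrightarrow> y \<in> X \<Longrightarrow> cmpb r x y \<Longrightarrow> (x, y) \<in> inc_basis X r \<or> (y, x) \<in> inc_basis X r"
  unfolding cmpb_def inc_basis_def poset_less_def by auto

lemma Phi_hom:
  assumes fa: "is_poset_aut X r f \<or> is_poset_antiaut X r f"
    and ga: "is_poset_aut X r g \<or> is_poset_antiaut X r g"
  shows "PhiM X r (compose X f g) = compose (inc_basis X r) (PhiM X r f) (PhiM X r g)"
proof (rule ext)
  fix p
  show "PhiM X r (compose X f g) p = compose (inc_basis X r) (PhiM X r f) (PhiM X r g) p"
  proof (cases "p \<in> inc_basis X r")
    case False
    then show ?thesis by (simp add: PhiM_def compose_def)
  next
    case True
    then obtain x y where p: "p = (x, y)" and xy: "x \<in> X" "y \<in> X" unfolding inc_basis_def by auto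
    have gB: "PhiM X r g (x, y) \<in> inc_basis X r"
      using Phi_in[OF ga] True p unfolding is_proper_def by (metis bij_betw_apply)
    have gx: "g x \<in> X" "g y \<in> X" using ga xy unfolding is_poset_aut_def is_poset_antiaut_def
      by (metis bij_betw_apply)+
    have cx: "compose X f g x = f (g x)" "compose X f g y = f (g y)" using xy by (simp_all add: compose_eq)
    show ?thesis
    proof (cases "is_poset_aut X r f")
      case fA: True
      show ?thesis
      proof (cases "is_poset_aut X r g")
        case gA: True
        show ?thesis using gB True p cx Phi_aut[OF fA] Phi_aut[OF gA] Phi_aut[OF comp_aa[OF fA gA]]
          by (simp add: compose_eq)
      next
        case False
        then have gA: "is_poset_antiaut X r g" using ga by auto
        show ?thesis using gB True p cx Phi_aut[OF fA] Phi_anti[OF gA] Phi_anti[OF comp_an[OF fA gA]]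
          by (simp add: compose_eq)
      qed
    next
      case False
      then have fA: "is_poset_antiaut X r f" using fa by auto
      show ?thesis
      proof (cases "is_poset_aut X r g")
        case gA: True
        show ?thesis using gB True p cx Phi_anti[OF fA] Phi_aut[OF gA] Phi_anti[OF comp_na[OF fA gA]]
          by (simp add: compose_eq)
      next
        case False
        then have gA: "is_poset_antiaut X r g" using ga by auto
        show ?thesis using gB True p cx Phi_anti[OF fA] Phi_anti[OF gA] Phi_aut[OF comp_nn[OF fA gA]]
          by (simp add: compose_eq)
      qed
    qed
  qed
qed

lemma Phi_mixed:
  assumes fA: "is_poset_aut X r f" and gA: "is_poset_antiaut X r g" and e: "PhiM X r f = PhiM X r g"
  shows False
proof -
  have key: "f u = g v" if u: "u \<in> X" and v: "v \<in> X" and c: "cmpb r u v" for u v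
  proof -
    from B_cases[OF u v c] show ?thesis
    proof
      assume b: "(u, v) \<in> inc_basis X r"
      show ?thesis using Phi_aut[OF fA b] Phi_anti[OF gA b] e by simp
    next
      assume b: "(v, u) \<in> inc_basis X r"
      show ?thesis using Phi_aut[OF fA b] Phi_anti[OF gA b] e by simp
    qed
  qed
  obtain u a b where uab: "u \<in> X" "a \<in> X" "b \<in> X" "a \<noteq> b" "cmpb r u a" "cmpb r u b"
    using L2 by blast
  have "g a = g b" using key[OF uab(1,2,5)] key[OF uab(1,3,6)] by simp
  moreover have "inj_on g X" using gA unfolding is_poset_antiaut_def bij_betw_def by auto
  ultimately show False using uab inj_on_def by metis
qed

lemma Phi_inj:
  assumes fa: "is_poset_aut X r f \<or> is_poset_antiaut X r f"
    and ga: "is_poset_aut X r g \<or> is_poset_antiaut X r g"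
    and fe: "f \<in> extensional X" and ge: "g \<in> extensional X"
    and e: "PhiM X r f = PhiM X r g"
  shows "f = g"
proof (cases "is_poset_aut X r f")
  case fA: True
  show ?thesis
  proof (cases "is_poset_aut X r g")
    case gA: True
    show ?thesis
    proof (rule extensionalityI[OF fe ge])
      fix x assume x: "x \<in> X"
      obtain y where y: "y \<in> X" "cmpb r x y" using L1[OF x] by auto
      from B_cases[OF x y] show "f x = g x"
      proof
        assume b: "(x, y) \<in> inc_basis X r"
        show ?thesis using Phi_aut[OF fA b] Phi_aut[OF gA b] e by simp
      next
        assume b: "(y, x) \<in> inc_basis X r"
        show ?thesis using Phi_aut[OF fA b] Phi_aut[OF gA b] e by simp
      qed
    qed
  next
    case False
    then have gA: "is_poset_antiaut X r g" using ga by auto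
    show ?thesis using Phi_mixed[OF fA gA e] by simp
  qed
next
  case False
  then have fA: "is_poset_antiaut X r f" using fa by auto
  show ?thesis
  proof (cases "is_poset_aut X r g")
    case gA: True
    show ?thesis using Phi_mixed[OF gA fA e[symmetric]] by simp
  next
    case False
    then have gA: "is_poset_antiaut X r g" using ga by auto
    show ?thesis
    proof (rule extensionalityI[OF fe ge])
      fix x assume x: "x \<in> X"
      obtain y where y: "y \<in> X" "cmpb r x y" using L1[OF x] by auto
      from B_cases[OF x y] show "f x = g x"
      proof
        assume b: "(x, y) \<in> inc_basis X r"
        show ?thesis using Phi_anti[OF fA b] Phi_anti[OF gA b] e by simp
      next
        assume b: "(y, x) \<in> inc_basis X r"
        show ?thesis using Phi_anti[OF fA b] Phi_anti[OF gA b] e by simp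
      qed
    qed
  qed
qed

lemma aut_restrict: "is_poset_aut X r f \<Longrightarrow> is_poset_aut X r (restrict f X)"
  unfolding is_poset_aut_def using bij_betw_cong[of X "restrict f X" f X] by simp

lemma anti_restrict: "is_poset_antiaut X r f \<Longrightarrow> is_poset_antiaut X r (restrict f X)"
  unfolding is_poset_antiaut_def using bij_betw_cong[of X "restrict f X" f X] by simp

lemma Phi_surj:
  assumes te: "\<theta> \<in> extensional (inc_basis X r)" and tp: "is_proper X r \<theta>"
  shows "\<exists>f. f \<in> extensional X \<and> (is_poset_aut X r f \<or> is_poset_antiaut X r f) \<and> PhiM X r f = \<theta>"
proof -
  obtain f where f: "(is_poset_aut X r f \<and> (\<forall>(x, y)\<in>inc_basis X r. \<theta> (x, y) = (f x, f y)))
        \<or> (is_poset_antiaut X r f \<and> (\<forall>(x, y)\<in>inc_basis X r. \<theta> (x, y) = (f y, f x)))"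
    using tp unfolding is_proper_def by blast
  let ?f = "restrict f X"
  have sub: "\<And>x y. (x, y) \<in> inc_basis X r \<Longrightarrow> x \<in> X \<and> y \<in> X" unfolding inc_basis_def by auto
  show ?thesis
  proof (rule exI[of _ ?f], intro conjI)
    show "?f \<in> extensional X" by simp
    show "is_poset_aut X r ?f \<or> is_poset_antiaut X r ?f" using f aut_restrict anti_restrict by blast
    show "PhiM X r ?f = \<theta>"
    proof (rule extensionalityI[OF _ te])
      show "PhiM X r ?f \<in> extensional (inc_basis X r)" unfolding PhiM_def by simp
    next
      fix p assume p: "p \<in> inc_basis X r"
      then obtain x y where pp: "p = (x, y)" by (cases p) auto
      show "PhiM X r ?f p = \<theta> p"
      proof (cases "is_poset_aut X r f \<and> (\<forall>(x, y)\<in>inc_basis X r. \<theta> (x, y) = (f x, f y))")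
        case True
        then show ?thesis using Phi_aut[OF aut_restrict, of f x y] p pp sub[of x y] by auto
      next
        case False
        then have A: "is_poset_antiaut X r f" "\<forall>(x, y)\<in>inc_basis X r. \<theta> (x, y) = (f y, f x)" using f by auto
        then show ?thesis using Phi_anti[OF anti_restrict[OF A(1)], of x y] p pp sub[of x y] by auto
      qed
    qed
  qed
qed

lemma main_iso: "proper_group X r \<cong> aut_pm_group X r"
proof -
  let ?G = "aut_pm_group X r" and ?P = "proper_group X r"
  let ?\<Phi> = "PhiM X r"
  have cG: "carrier ?G = {f. f \<in> extensional X \<and> (is_poset_aut X r f \<or> is_poset_antiaut X r f)}"
    by (simp add: aut_pm_group_def)
  have mG: "\<And>f g. f \<otimes>\<^bsub>?G\<^esub> g = compose X f g" by (simp add: aut_pm_group_def)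
  have cP: "carrier ?P = {\<theta>. \<theta> \<in> extensional (inc_basis X r) \<and> is_proper X r \<theta>}"
    by (simp add: proper_group_def)
  have mP: "\<And>f g. f \<otimes>\<^bsub>?P\<^esub> g = compose (inc_basis X r) f g" by (simp add: proper_group_def)
  have closG: "compose X f g \<in> carrier ?G" if "f \<in> carrier ?G" "g \<in> carrier ?G" for f g
    using that comp_aa comp_an comp_na comp_nn unfolding cG by auto
  have injG: "inj_on ?\<Phi> (carrier ?G)"
    by (rule inj_onI) (use Phi_inj in \<open>auto simp: cG\<close>)
  have imG: "?\<Phi> ` carrier ?G = carrier ?P"
  proof
    show "?\<Phi> ` carrier ?G \<subseteq> carrier ?P" using Phi_in unfolding cG cP by auto
    show "carrier ?P \<subseteq> ?\<Phi> ` carrier ?G"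
    proof
      fix \<theta> assume "\<theta> \<in> carrier ?P"
      then obtain f where "f \<in> extensional X" "is_poset_aut X r f \<or> is_poset_antiaut X r f" "?\<Phi> f = \<theta>"
        using Phi_surj unfolding cP by blast
      then show "\<theta> \<in> ?\<Phi> ` carrier ?G" unfolding cG by force
    qed
  qed
  have bijG: "bij_betw ?\<Phi> (carrier ?G) (carrier ?P)" using injG imG bij_betw_def by blast
  let ?\<Psi> = "inv_into (carrier ?G) ?\<Phi>"
  have bijP: "bij_betw ?\<Psi> (carrier ?P) (carrier ?G)" using bij_betw_inv_into[OF bijG] .
  have "?\<Psi> \<in> hom ?P ?G"
  proof (rule homI)
    fix a assume "a \<in> carrier ?P"
    then show "?\<Psi> a \<in> carrier ?G" using bijP bij_betw_apply by metis
  next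
    fix a b assume a: "a \<in> carrier ?P" and b: "b \<in> carrier ?P"
    define f where "f = ?\<Psi> a"
    define g where "g = ?\<Psi> b"
    have fG: "f \<in> carrier ?G" and gG: "g \<in> carrier ?G"
      using a b bijP bij_betw_apply f_def g_def by metis+
    have fa: "?\<Phi> f = a" using a imG f_def by (simp add: f_inv_into_f)
    have gb: "?\<Phi> g = b" using b imG g_def by (simp add: f_inv_into_f)
    have "?\<Phi> (compose X f g) = a \<otimes>\<^bsub>?P\<^esub> b"
      using Phi_hom fG gG fa gb unfolding mP cG by auto
    then have "?\<Psi> (a \<otimes>\<^bsub>?P\<^esub> b) = compose X f g"
      using inv_into_f_f[OF injG closG[OF fG gG]] by simp
    then show "?\<Psi> (a \<otimes>\<^bsub>?P\<^esub> b) = ?\<Psi> a \<otimes>\<^bsub>?G\<^esub> ?\<Psi> b"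
      unfolding mG f_def g_def by simp
  qed
  then have "?\<Psi> \<in> iso ?P ?G" using bijP unfolding iso_def by blast
  then show ?thesis by (rule is_isoI)
qed

end

theorem proposition2p3:
  fixes X :: "'a set" and r :: "'a rel"
  assumes "partial_order_on X r"
    and "finite X"
    and "poset_connected X r"
    and "card X > 2"
  shows "proper_group X r \<cong> aut_pm_group X r"
  using main_iso[OF assms] .

end
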